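(* Let $ABCD$ be a parallelogram with center $O$ (the intersection of its diagonals), and let $f\colon ABCD\to\mathbb{R}$ be a function whose restrictions to the triangles $AOB$, $BOC$, $COD$ and $DOA$ are convex. Let $A'B'C'D'=h_O^{2/3}(ABCD)$ (i.e. $A'=h_O^{2/3}(A)$, etc.), and let $KL=h_D^{2/3}(AO)$, $LM=h_D^{2/3}(OC)$, $PQ=h_B^{2/3}(AO)$, $QR=h_B^{2/3}(OC)$. Then $$\frac{\operatorname{Avg}(f,KL)+\operatorname{Avg}(f,LM)+\operatorname{Avg}(f,PQ)+\operatorname{Avg}(f,QR)}{4}\le\operatorname{Avg}(f,ABCD),$$ $$\frac{\operatorname{Avg}(f,A'B')+\operatorname{Avg}(f,B'C')+\operatorname{Avg}(f,C'D')+\operatorname{Avg}(f,D'A')}{4}\le\operatorname{Avg}(f,ABCD).$$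
   Context: $h_{\mathbf a}^\lambda$ denotes the homothety with center $\mathbf a$ and ratio $\lambda$: $h_{\mathbf a}^\lambda(\mathbf x)=\mathbf a+\lambda(\mathbf x-\mathbf a)$. For a set $U$ which is a $k$-dimensional object (segment, polygon) and an integrable $f$, $\operatorname{Avg}(f,U)=\frac{1}{\operatorname{Vol}_k(U)}\int_U f$, with $\operatorname{Vol}_k$ the $k$-dimensional measure (length, area). For points $X,Y,\dots$, $\operatorname{Avg}(f,XY\dots)$ means $\operatorname{Avg}(f,\operatorname{conv}\{X,Y,\dots\})$. *)

theory Defs
  imports "HOL-Analysis.Analysis"
begin

definition homothety :: "'a::real_vector \<Rightarrow> real \<Rightarrow> 'a \<Rightarrow> 'a" where
  "homothety a lam x = a + lam *\<^sub>R (x - a)"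

text \<open>Average of f over the segment [P,Q] with respect to arc length:
  (1/|PQ|) \<integral>_[P,Q] f ds = \<integral>_0^1 f(P + t(Q-P)) dt (P \<noteq> Q).\<close>
definition avg_seg :: "('a::real_normed_vector \<Rightarrow> real) \<Rightarrow> 'a \<Rightarrow> 'a \<Rightarrow> real" where
  "avg_seg f P Q = integral {0..1} (\<lambda>t. f (P + t *\<^sub>R (Q - P)))"

definition avg_region :: "(real^2 \<Rightarrow> real) \<Rightarrow> (real^2) set \<Rightarrow> real" where
  "avg_region f S = integral S f / measure lebesgue S"

end

theory Submission
  imports Defs
begin


definition v2 :: "real \<times> real \<Rightarrow> real^2" where "v2 z = (\<chi> i. if i = 1 then fst z else snd z)"

lemma v2_nth [simp]: "v2 z $ 1 = fst z" "v2 z $ 2 = snd z"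
  by (simp_all add: v2_def)

lemma v2_cont: "continuous_on UNIV v2"
  unfolding v2_def
  apply (intro continuous_intros)
  subgoal for i by (cases "i = 1") (simp_all add: continuous_on_fst continuous_on_snd continuous_on_id)
  done

lemma v2_meas [measurable]: "v2 \<in> borel_measurable borel"
  using v2_cont by (rule borel_measurable_continuous_onI)

lemma prod_Basis_2: "(\<Prod>b\<in>(Basis::(real^2) set). g b) = g (axis 1 1) * g (axis 2 1)"
proof -
  have B: "(Basis::(real^2) set) = {axis 1 1, axis 2 1}"
    by (auto simp: Basis_vec_def UNIV_2)
  have n: "axis 1 1 \<noteq> (axis 2 1 :: real^2)"
    by (simp add: axis_eq_axis)
  show ?thesis by (simp add: B n)
qed

lemma distr_v2: "distr lborel borel v2 = (lborel :: (real^2) measure)"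
proof (rule lborel_eqI[symmetric])
  fix l u :: "real^2"
  assume le: "\<And>b. b \<in> Basis \<Longrightarrow> l \<bullet> b \<le> u \<bullet> b"
  have l1: "l$1 \<le> u$1" using le[of "axis 1 1"] by (auto simp: Basis_vec_def inner_axis)
  have l2: "l$2 \<le> u$2" using le[of "axis 2 1"] by (auto simp: Basis_vec_def inner_axis)
  have pre: "v2 -` box l u = box (l$1) (u$1) \<times> box (l$2) (u$2)"
    by (auto simp: mem_box_cart forall_2 box_real)
  have "emeasure (distr lborel borel v2) (box l u) = emeasure lborel (box (l$1) (u$1) \<times> box (l$2) (u$2))"
    by (simp add: emeasure_distr pre)
  also have "\<dots> = emeasure (lborel \<Otimes>\<^sub>M lborel) (box (l$1) (u$1) \<times> box (l$2) (u$2))"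
    by (simp add: lborel_prod)
  also have "\<dots> = ennreal (u$1 - l$1) * ennreal (u$2 - l$2)"
    by (simp add: lborel.emeasure_pair_measure_Times box_real l1 l2)
  also have "\<dots> = (\<Prod>b\<in>Basis. (u - l) \<bullet> b)"
    by (simp add: prod_Basis_2 inner_axis ennreal_mult l1 l2)
  finally show "emeasure (distr lborel borel v2) (box l u) = (\<Prod>b\<in>Basis. (u - l) \<bullet> b)" .
qed simp

lemma integral_v2:
  fixes h :: "real^2 \<Rightarrow> real"
  assumes "h \<in> borel_measurable borel"
  shows "integral\<^sup>L lborel h = integral\<^sup>L lborel (\<lambda>z. h (v2 z))"
    and "integrable lborel h \<longleftrightarrow> integrable lborel (\<lambda>z. h (v2 z))"
proof -
  show "integral\<^sup>L lborel h = integral\<^sup>L lborel (\<lambda>z. h (v2 z))"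
    by (subst distr_v2[symmetric], rule integral_distr) (auto simp: assms)
  show "integrable lborel h \<longleftrightarrow> integrable lborel (\<lambda>z. h (v2 z))"
    by (subst distr_v2[symmetric], rule integrable_distr_eq) (auto simp: assms)
qed



lemma H1:
  fixes h :: "'a::euclidean_space \<Rightarrow> real"
  assumes S: "S \<in> sets borel" "bounded S" and c: "continuous_on S h"
    and K: "\<And>x. x \<in> S \<Longrightarrow> \<bar>h x\<bar> \<le> K"
  shows "set_integrable lborel S h"
proof -
  have m: "(\<lambda>x. indicator S x *\<^sub>R h x) \<in> borel_measurable borel"
    by (rule borel_measurable_continuous_on_indicator[OF S(1) c])
  have "integrable lborel (\<lambda>x. indicator S x *\<^sub>R (indicator S x *\<^sub>R h x))"
  proof (rule integrableI_bounded_set_indicator[where B=K])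
    show "S \<in> sets lborel" using S by simp
    show "(\<lambda>x. indicator S x *\<^sub>R h x) \<in> borel_measurable lborel"
      using m by simp
    show "emeasure lborel S < \<infinity>"
      using S emeasure_bounded_finite by blast
    show "AE x in lborel. x \<in> S \<longrightarrow> norm (indicator S x *\<^sub>R h x) \<le> K"
      using K by auto
  qed
  moreover have "(\<lambda>x. indicator S x *\<^sub>R (indicator S x *\<^sub>R h x)) = (\<lambda>x. indicator S x *\<^sub>R h x)"
    by (auto simp: indicator_def fun_eq_iff)
  ultimately show ?thesis
    unfolding set_integrable_def by simp
qed

lemma subgrad:
  fixes G :: "real \<Rightarrow> real"
  assumes cv: "convex_on {a<..<b} G" and x0: "a < x0" "x0 < b"
  shows "\<exists>c. \<forall>s\<in>{a<..<b}. G x0 + c * (s - x0) \<le> G s"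
proof -
  define RS where "RS = (\<lambda>t. (G x0 - G t) / (x0 - t)) ` {x0<..<b}"
  have ne: "RS \<noteq> {}" using x0 unfolding RS_def by auto
  have lb: "(G x0 - G t) / (x0 - t) \<le> r" if tt: "t \<in> {a<..<x0}" and rr: "r \<in> RS" for t r
  proof -
    obtain u where u: "u \<in> {x0<..<b}" "r = (G x0 - G u) / (x0 - u)"
      using rr unfolding RS_def by auto
    have "(G t - G x0) / (t - x0) \<le> (G t - G u) / (t - u)"
      using convex_on_slope_le(1)[OF cv, of t u x0] tt u x0 by auto
    also have "\<dots> \<le> (G x0 - G u) / (x0 - u)"
      using convex_on_slope_le(2)[OF cv, of t u x0] tt u x0 by auto
    finally show ?thesis using u by (metis minus_diff_eq minus_divide_divide)
  qed
  have bdd: "bdd_below RS"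
  proof -
    obtain t where "t \<in> {a<..<x0}" using x0 by (meson dense greaterThanLessThan_iff)
    then show ?thesis using lb unfolding bdd_below_def by blast
  qed
  define c where "c = Inf RS"
  show ?thesis
  proof (intro exI ballI)
    fix s assume s: "s \<in> {a<..<b}"
    consider "s < x0" | "s = x0" | "s > x0" by linarith
    then show "G x0 + c * (s - x0) \<le> G s"
    proof cases
      case 1
      have "(G x0 - G s) / (x0 - s) \<le> c"
        unfolding c_def using lb s 1 ne by (intro cInf_greatest) auto
      then have "G x0 - G s \<le> c * (x0 - s)" using 1 by (simp add: pos_divide_le_eq)
      then show ?thesis by (simp add: right_diff_distrib)
    next
      case 3
      have "c \<le> (G x0 - G s) / (x0 - s)"
        unfolding c_def RS_def using s 3 bdd[unfolded RS_def] by (intro cInf_lower) auto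
      moreover have "(G x0 - G s) / (x0 - s) = (G s - G x0) / (s - x0)"
        by (metis minus_diff_eq minus_divide_divide)
      ultimately have "c * (s - x0) \<le> G s - G x0" using 3 by (simp add: pos_le_divide_eq)
      then show ?thesis by simp
    qed simp
  qed
qed



lemma poly_has_int: "((\<lambda>s::real. s * a + c * (s * (s - 2/3))) has_integral a/2) {0..1}"
proof -
  define F where "F = (\<lambda>s::real. s^2/2 * a + c * (s^3/3 - s^2/3))"
  have "((\<lambda>s::real. s * a + c * (s * (s - 2/3))) has_integral (F 1 - F 0)) {0..1}"
  proof (rule fundamental_theorem_of_calculus)
    show "(F has_vector_derivative s * a + c * (s * (s - 2/3))) (at s within {0..1})" for s
      unfolding F_def has_real_derivative_iff_has_vector_derivative[symmetric]
      by (rule derivative_eq_intros refl | simp add: algebra_simps power2_eq_square)+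
  qed simp
  then show ?thesis by (simp add: F_def)
qed

lemma poly_lint: "(LINT s:{0<..<1}|lborel. s * a + c * (s * (s - 2/3::real))) = a/2"
proof -
  have si: "set_integrable lborel {0<..<1::real} (\<lambda>s. s * a + c * (s * (s - 2/3)))"
  proof (rule H1[where K="\<bar>a\<bar> + \<bar>c\<bar>"])
    show "continuous_on {0<..<1} (\<lambda>s::real. s * a + c * (s * (s - 2 / 3)))"
      by (intro continuous_intros)
    fix s :: real assume s: "s \<in> {0<..<1}"
    have "\<bar>s * a\<bar> \<le> \<bar>a\<bar>" using s by (simp add: abs_mult mult_left_le_one_le)
    moreover have "\<bar>s * (s - 2/3)\<bar> \<le> 1" using s by (auto simp: abs_mult abs_le_iff intro: mult_le_one)
    then have "\<bar>c * (s * (s - 2/3))\<bar> \<le> \<bar>c\<bar>" by (simp add: abs_mult mult_left_le)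
    ultimately show "\<bar>s * a + c * (s * (s - 2 / 3))\<bar> \<le> \<bar>a\<bar> + \<bar>c\<bar>" by linarith
  qed auto
  have "(LINT s:{0<..<1}|lborel. s * a + c * (s * (s - 2/3::real))) = integral {0<..<1} (\<lambda>s. s * a + c * (s * (s - 2/3)))"
    by (rule set_borel_integral_eq_integral(2)[OF si])
  also have "\<dots> = integral {0..1} (\<lambda>s. s * a + c * (s * (s - 2/3)))"
    by (simp add: integral_open_interval_real)
  also have "\<dots> = a/2" using poly_has_int by (rule integral_unique)
  finally show ?thesis .
qed



definition Phi :: "real^2 \<Rightarrow> real^2 \<Rightarrow> real^2 \<Rightarrow> real \<times> real \<Rightarrow> real^2" where
  "Phi V X Y z = V + fst z *\<^sub>R (X - V) + snd z *\<^sub>R (Y - X)"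

definition Rc :: "(real \<times> real) set" where "Rc = {z. 0 \<le> snd z \<and> snd z \<le> fst z \<and> fst z \<le> 1}"
definition Ro :: "(real \<times> real) set" where "Ro = {z. 0 < snd z \<and> snd z < fst z \<and> fst z < 1}"

definition det2 :: "real^2 \<Rightarrow> real^2 \<Rightarrow> real" where "det2 u w = u$1 * w$2 - u$2 * w$1"

lemma Ro_sub: "Ro \<subseteq> Rc" by (auto simp: Ro_def Rc_def)

lemma open_Ro: "open Ro"
  unfolding Ro_def by (intro open_Collect_conj open_Collect_less continuous_intros)

lemma convex_Rc_aux:
  fixes a b c d u v :: real
  assumes h: "0 \<le> b" "b \<le> a" "a \<le> 1" "0 \<le> d" "d \<le> c" "c \<le> 1" "0 \<le> u" "0 \<le> v" "u + v = 1"
  shows "0 \<le> u * b + v * d \<and> u * b + v * d \<le> u * a + v * c \<and> u * a + v * c \<le> 1"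
proof -
  have "0 \<le> u * b + v * d" using h by simp
  moreover have "u * b + v * d \<le> u * a + v * c" using h by (intro add_mono mult_left_mono) auto
  moreover have "u * a + v * c \<le> u * 1 + v * 1" using h by (intro add_mono mult_left_mono) auto
  ultimately show ?thesis using h by simp
qed

lemma convex_Rc: "convex Rc"
proof (unfold convex_def, intro ballI allI impI)
  fix x y :: "real \<times> real" and u v :: real
  assume h: "x \<in> Rc" "y \<in> Rc" "0 \<le> u" "0 \<le> v" "u + v = 1"
  obtain a b c d where xy: "x = (a, b)" "y = (c, d)" by (cases x, cases y) auto
  show "u *\<^sub>R x + v *\<^sub>R y \<in> Rc"
    using convex_Rc_aux[of b a d c u v] h unfolding xy Rc_def by simp
qed

lemma convex_Ro_aux:
  fixes a b c d u v :: real
  assumes h: "0 < b" "b < a" "a < 1" "0 < d" "d < c" "c < 1" "0 \<le> u" "0 \<le> v" "u + v = 1"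
  shows "0 < u * b + v * d \<and> u * b + v * d < u * a + v * c \<and> u * a + v * c < 1"
proof -
  have "0 < u * b + v * d"
  proof (cases "u = 0")
    case True then show ?thesis using h by simp
  next
    case False then have "0 < u * b" using h by simp
    moreover have "0 \<le> v * d" using h by simp
    ultimately show ?thesis by simp
  qed
  moreover have "u * b + v * d < u * a + v * c"
  proof (cases "u = 0")
    case True then show ?thesis using h by simp
  next
    case False then have "u * b < u * a" using h by simp
    moreover have "v * d \<le> v * c" using h by (intro mult_left_mono) auto
    ultimately show ?thesis by simp
  qed
  moreover have "u * a + v * c < u * 1 + v * 1"
  proof (cases "u = 0")
    case True then show ?thesis using h by simp
  next
    case False then have "u * a < u * 1" using h by simp
    moreover have "v * c \<le> v * 1" using h by (intro mult_left_mono) auto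
    ultimately show ?thesis by simp
  qed
  ultimately show ?thesis using h by simp
qed

lemma convex_Ro: "convex Ro"
proof (unfold convex_def, intro ballI allI impI)
  fix x y :: "real \<times> real" and u v :: real
  assume h: "x \<in> Ro" "y \<in> Ro" "0 \<le> u" "0 \<le> v" "u + v = 1"
  obtain a b c d where xy: "x = (a, b)" "y = (c, d)" by (cases x, cases y) auto
  show "u *\<^sub>R x + v *\<^sub>R y \<in> Ro"
    using convex_Ro_aux[of b a d c u v] h unfolding xy Ro_def by simp
qed

lemma Phi_mem: "z \<in> Rc \<Longrightarrow> Phi V X Y z \<in> convex hull {V, X, Y}"
proof -
  assume z: "z \<in> Rc"
  obtain s t where st: "z = (s, t)" by (cases z)
  have eq: "Phi V X Y z = (1 - s) *\<^sub>R V + (s - t) *\<^sub>R X + t *\<^sub>R Y"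
    by (simp add: Phi_def st algebra_simps)
  have h: "0 \<le> t" "t \<le> s" "s \<le> 1" using z by (auto simp: Rc_def st)
  show ?thesis unfolding convex_hull_3 eq
    apply (rule CollectI, rule exI[where x="1 - s"], rule exI[where x="s - t"], rule exI[where x=t])
    using h by auto
qed

lemma Phi_affine: "u + v = 1 \<Longrightarrow> Phi V X Y (u *\<^sub>R z1 + v *\<^sub>R z2) = u *\<^sub>R Phi V X Y z1 + v *\<^sub>R Phi V X Y z2"
proof -
  assume uv: "u + v = 1"
  then have "V = u *\<^sub>R V + v *\<^sub>R V" by (metis scaleR_add_left scaleR_one)
  then show ?thesis unfolding Phi_def
    by (simp add: algebra_simps)
qed

lemma convex_F0:
  assumes "convex_on (convex hull {V, X, Y}) f"
  shows "convex_on Rc (\<lambda>z. f (Phi V X Y z))"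
  unfolding convex_on_def
proof (intro conjI convex_Rc ballI allI impI)
  fix x y u v assume h: "x \<in> Rc" "y \<in> Rc" "(0::real) \<le> u" "0 \<le> v" "u + v = 1"
  show "f (Phi V X Y (u *\<^sub>R x + v *\<^sub>R y)) \<le> u * f (Phi V X Y x) + v * f (Phi V X Y y)"
    using assms h Phi_mem[OF h(1)] Phi_mem[OF h(2)] unfolding Phi_affine[OF h(5)] convex_on_def
    by blast
qed



lemma tri_bound:
  fixes V X Y :: "'a::real_vector"
  assumes cv: "convex_on (convex hull {V, X, Y}) f"
  shows "\<exists>K. \<forall>x \<in> convex hull {V, X, Y}. \<bar>f x\<bar> \<le> K"
proof -
  define M where "M = max (f V) (max (f X) (f Y))"
  have up: "\<forall>x \<in> convex hull {V, X, Y}. f x \<le> M"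
    by (rule convex_on_convex_hull_bound[OF cv]) (auto simp: M_def)
  define z where "z = (1/3) *\<^sub>R V + (1/3) *\<^sub>R X + (1/3) *\<^sub>R Y"
  have lo: "3 * f z - 2 * M \<le> f x" if x: "x \<in> convex hull {V, X, Y}" for x
  proof -
    obtain a b c where abc: "x = a *\<^sub>R V + b *\<^sub>R X + c *\<^sub>R Y" "0 \<le> a" "0 \<le> b" "0 \<le> c" "a + b + c = 1"
      using x unfolding convex_hull_3 by blast
    define y where "y = ((1-a)/2) *\<^sub>R V + ((1-b)/2) *\<^sub>R X + ((1-c)/2) *\<^sub>R Y"
    have y: "y \<in> convex hull {V, X, Y}"
      unfolding convex_hull_3 y_def
      apply (rule CollectI, rule exI[where x="(1-a)/2"], rule exI[where x="(1-b)/2"], rule exI[where x="(1-c)/2"])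
      using abc by (auto simp: field_simps)
    have e: "(1/3) * \<alpha> + (2/3) * ((1 - \<alpha>)/2) = (1/3::real)" for \<alpha> by (simp add: field_simps)
    have zeq: "z = (1 - 2/3) *\<^sub>R x + (2/3) *\<^sub>R y"
    proof -
      have "(1 - 2/3) *\<^sub>R x + (2/3) *\<^sub>R y = ((1/3) * a + (2/3) * ((1-a)/2)) *\<^sub>R V
          + ((1/3) * b + (2/3) * ((1-b)/2)) *\<^sub>R X + ((1/3) * c + (2/3) * ((1-c)/2)) *\<^sub>R Y"
        unfolding abc(1) y_def scaleR_add_right scaleR_add_left scaleR_scaleR by (simp add: add_ac)
      then show ?thesis unfolding e z_def by simp
    qed
    have "f z \<le> (1 - 2/3) * f x + (2/3) * f y"
      unfolding zeq by (rule convex_onD[OF cv]) (use x y in auto)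
    moreover have "f y \<le> M" using up y by blast
    ultimately show ?thesis by simp
  qed
  show ?thesis
  proof (rule exI[where x="\<bar>M\<bar> + \<bar>3 * f z - 2 * M\<bar>"], intro ballI)
    fix x assume x: "x \<in> convex hull {V, X, Y}"
    have "f x \<le> M" "3 * f z - 2 * M \<le> f x" using up lo x by auto
    then show "\<bar>f x\<bar> \<le> \<bar>M\<bar> + \<bar>3 * f z - 2 * M\<bar>" by linarith
  qed
qed



definition Psi0 :: "real^2 \<Rightarrow> real^2 \<Rightarrow> real^2 \<Rightarrow> real^2 \<Rightarrow> real^2" where
  "Psi0 V X Y p = (p$1) *\<^sub>R (X - V) + (p$2) *\<^sub>R (Y - X)"

definition unv2 :: "real^2 \<Rightarrow> real \<times> real" where "unv2 p = (p$1, p$2)"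

lemma unv2_v2 [simp]: "unv2 (v2 z) = z" by (simp add: unv2_def)
lemma v2_unv2 [simp]: "v2 (unv2 p) = p"
  by (simp add: unv2_def vec_eq_iff forall_2)

lemma Phi_unv2: "Phi V X Y (unv2 p) = V + Psi0 V X Y p"
  by (simp add: Phi_def Psi0_def unv2_def)

lemma linear_Psi0: "linear (Psi0 V X Y)"
  by (auto simp: linear_iff Psi0_def algebra_simps)

lemma det_Psi0: "det (matrix (Psi0 V X Y)) = det2 (X - V) (Y - X)"
  by (simp add: det_2 matrix_def Psi0_def det2_def axis_def)

lemma image_Psi:
  "(\<lambda>p. V + Psi0 V X Y p) ` (unv2 -` Rc) = convex hull {V, X, Y}"
proof
  show "(\<lambda>p. V + Psi0 V X Y p) ` (unv2 -` Rc) \<subseteq> convex hull {V, X, Y}"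
    using Phi_mem[of _ V X Y] by (auto simp: Phi_unv2[symmetric])
  show "convex hull {V, X, Y} \<subseteq> (\<lambda>p. V + Psi0 V X Y p) ` (unv2 -` Rc)"
  proof
    fix x assume "x \<in> convex hull {V, X, Y}"
    then obtain u v w where x: "x = u *\<^sub>R V + v *\<^sub>R X + w *\<^sub>R Y" "0 \<le> u" "0 \<le> v" "0 \<le> w" "u + v + w = 1"
      unfolding convex_hull_3 by blast
    have "x = V + Psi0 V X Y (v2 (v + w, w))"
    proof -
      have hV: "u *\<^sub>R V + (v *\<^sub>R V + w *\<^sub>R V) = V"
        by (metis x(5) add.assoc scaleR_add_left scaleR_one)
      then show ?thesis unfolding x(1) by (simp add: Psi0_def algebra_simps)
    qed
    moreover have "v2 (v + w, w) \<in> unv2 -` Rc" using x by (simp add: Rc_def)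
    ultimately show "x \<in> (\<lambda>p. V + Psi0 V X Y p) ` (unv2 -` Rc)" by blast
  qed
qed

lemma negl_Sc_So: "negligible (unv2 -` Rc - unv2 -` Ro)"
proof -
  have "unv2 -` Rc - unv2 -` Ro \<subseteq> {x. axis 2 1 \<bullet> x = 0} \<union> {x. (axis 1 1 - axis 2 1) \<bullet> x = (0::real)} \<union> {x::real^2. axis 1 1 \<bullet> x = 1}"
    by (auto simp: Rc_def Ro_def unv2_def inner_axis' inner_diff_left)
  moreover have "axis 1 1 - axis 2 1 \<noteq> (0::real^2)"
    by (simp add: vec_eq_iff forall_2 axis_def)
  moreover have "negligible {x::real^2. axis 2 1 \<bullet> x = 0}"
    by (rule negligible_hyperplane) (simp add: axis_eq_0_iff)
  moreover have "negligible {x::real^2. axis 1 1 \<bullet> x = 1}"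
    by (rule negligible_hyperplane) (simp add: axis_eq_0_iff)
  moreover have "negligible {x::real^2. (axis 1 1 - axis 2 1) \<bullet> x = 0}"
    by (rule negligible_hyperplane) (use calculation in simp)
  ultimately show ?thesis
    by (meson negligible_Un negligible_subset)
qed



lemma closed_Sc: "closed (unv2 -` Rc)"
proof -
  have "unv2 -` Rc = {p::real^2. 0 \<le> p$2} \<inter> {p. p$2 \<le> p$1} \<inter> {p. p$1 \<le> 1}"
    by (auto simp: Rc_def unv2_def)
  then show ?thesis
    by (simp add: closed_Int closed_Collect_le continuous_on_component continuous_on_id continuous_on_const)
qed

lemma CV:
  fixes f :: "real^2 \<Rightarrow> real"
  assumes d: "det2 (X - V) (Y - X) \<noteq> 0"
    and si: "set_integrable lborel (unv2 -` Ro) (\<lambda>p. f (V + Psi0 V X Y p))"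
  shows "f absolutely_integrable_on convex hull {V, X, Y}"
    "integral (convex hull {V, X, Y}) f
       = \<bar>det2 (X - V) (Y - X)\<bar> * (LINT p:(unv2 -` Ro)|lborel. f (V + Psi0 V X Y p))"
proof -
  define g where "g = (\<lambda>p. V + Psi0 V X Y p)"
  define Sc where "Sc = unv2 -` Rc"
  define So where "So = unv2 -` Ro"
  have si': "set_integrable lborel So (\<lambda>p. f (g p))" using si by (simp add: g_def So_def)
  have abs_So: "(\<lambda>p. f (g p)) absolutely_integrable_on So"
    unfolding absolutely_integrable_on_def
    using set_borel_integral_eq_integral(1)[OF si'] set_borel_integral_eq_integral(1)[OF set_integrable_abs[OF si']]
    by simp
  have SoSc: "So \<subseteq> Sc" using Ro_sub by (auto simp: So_def Sc_def)
  have negl: "negligible (Sc - So)" using negl_Sc_So by (simp add: Sc_def So_def)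
  have abs_Sc: "(\<lambda>p. f (g p)) absolutely_integrable_on Sc"
    using abs_So absolutely_integrable_spike_set_eq[of So Sc "\<lambda>p. f (g p)"] SoSc
  proof -
    have "{x \<in> So - Sc. f (g x) \<noteq> 0} = {}" using SoSc by blast
    then have n1: "negligible {x \<in> So - Sc. f (g x) \<noteq> 0}" by (metis negligible_empty)
    have n2: "negligible {x \<in> Sc - So. f (g x) \<noteq> 0}"
      by (rule negligible_subset[OF negl]) auto
    show ?thesis using abs_So absolutely_integrable_spike_set_eq[of So Sc "\<lambda>p. f (g p)", OF n1 n2] by blast
  qed
  have int_eq: "integral Sc (\<lambda>p. f (g p)) = (LINT p:So|lborel. f (g p))"
  proof -
    have "integral Sc (\<lambda>p. f (g p)) = integral So (\<lambda>p. f (g p))"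
      by (rule integral_spike_set) (use SoSc negl in \<open>auto intro: negligible_subset\<close>)
    also have "\<dots> = (LINT p:So|lborel. f (g p))"
      by (rule set_borel_integral_eq_integral(2)[OF si', symmetric])
    finally show ?thesis .
  qed
  have Sc_leb: "Sc \<in> sets lebesgue"
    using lebesgue_closedin[of UNIV Sc] closed_Sc by (simp add: Sc_def)
  have der: "(g has_derivative Psi0 V X Y) (at x within Sc)" for x
    using has_derivative_add_const[OF linear_imp_has_derivative[OF linear_Psi0], of V X Y V]
    by (simp add: g_def add.commute)
  have inj: "inj_on g Sc"
  proof -
    have "inj (Psi0 V X Y)" using det_nz_iff_inj[OF linear_Psi0] d det_Psi0 by metis
    then show ?thesis by (auto simp: g_def inj_on_def inj_def)
  qed
  define D where "D = \<bar>det (matrix (Psi0 V X Y))\<bar>"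
  have DD: "D = \<bar>det2 (X - V) (Y - X)\<bar>" by (simp add: D_def det_Psi0)
  have absv: "(\<lambda>x. D *\<^sub>R vec (f (g x)) :: real^1) absolutely_integrable_on Sc"
    by (rule absolutely_integrable_scaleR_left) (use abs_Sc in \<open>simp add: absolutely_integrable_on_1_iff\<close>)
  note cv = has_absolute_integral_change_of_variables[OF Sc_leb der inj,
      of "\<lambda>x. vec (f x) :: real^1" "integral Sc (\<lambda>x. D *\<^sub>R vec (f (g x)))"]
  then have res: "(\<lambda>x. vec (f x) :: real^1) absolutely_integrable_on (g ` Sc) \<and>
      integral (g ` Sc) (\<lambda>x. vec (f x) :: real^1) = integral Sc (\<lambda>x. D *\<^sub>R vec (f (g x)))"
    using absv unfolding D_def by blast
  have img: "g ` Sc = convex hull {V, X, Y}"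
    using image_Psi by (simp add: g_def Sc_def)
  show "f absolutely_integrable_on convex hull {V, X, Y}"
    using res img by (simp add: absolutely_integrable_on_1_iff)
  have i1: "integral Sc (\<lambda>x. vec (f (g x)) :: real^1) = vec (integral Sc (\<lambda>x. f (g x)))"
    by (simp add: integral_on_1_eq)
  have i2: "integral (convex hull {V, X, Y}) (\<lambda>x. vec (f x) :: real^1) = vec (integral (convex hull {V, X, Y}) f)"
    by (simp add: integral_on_1_eq)
  have "vec (integral (convex hull {V, X, Y}) f) = (vec (integral Sc (\<lambda>x. D * f (g x))) :: real^1)"
    using res img i1 i2 by (simp add: vec_eq_iff)
  then have "integral (convex hull {V, X, Y}) f = integral Sc (\<lambda>x. D * f (g x))"
    by (simp add: vec_eq_iff)
  also have "\<dots> = D * integral Sc (\<lambda>x. f (g x))" by simp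
  finally show "integral (convex hull {V, X, Y}) f
       = \<bar>det2 (X - V) (Y - X)\<bar> * (LINT p:(unv2 -` Ro)|lborel. f (V + Psi0 V X Y p))"
    using int_eq DD by (simp add: g_def So_def)
qed



definition Gf :: "real^2 \<Rightarrow> real^2 \<Rightarrow> real^2 \<Rightarrow> (real^2 \<Rightarrow> real) \<Rightarrow> real \<Rightarrow> real" where
  "Gf V X Y f s = (\<integral>t. indicator {0<..<1::real} t * f (Phi V X Y (s, s*t)) \<partial>lborel)"

lemma F0_props:
  assumes cv: "convex_on (convex hull {V, X, Y}) f"
  shows "continuous_on Ro (\<lambda>z. f (Phi V X Y z))"
    "\<exists>K. \<forall>z\<in>Rc. \<bar>f (Phi V X Y z)\<bar> \<le> K"
proof -
  show "continuous_on Ro (\<lambda>z. f (Phi V X Y z))"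
    by (rule convex_on_continuous[OF open_Ro convex_on_subset[OF convex_F0[OF cv] Ro_sub convex_Ro]])
  obtain K where K: "\<forall>x \<in> convex hull {V, X, Y}. \<bar>f x\<bar> \<le> K" using tri_bound[OF cv] by blast
  then show "\<exists>K. \<forall>z\<in>Rc. \<bar>f (Phi V X Y z)\<bar> \<le> K" using Phi_mem by blast
qed

lemma bounded_Ro: "bounded Ro"
proof -
  have "Ro \<subseteq> cbox (0,0) (1,1)" by (auto simp: Ro_def cbox_Pair_eq)
  then show ?thesis by (meson bounded_cbox bounded_subset)
qed

lemma unv2_meas [measurable]: "unv2 \<in> borel_measurable borel"
proof -
  have "continuous_on UNIV unv2" unfolding unv2_def by (intro continuous_intros)
  then show ?thesis by (rule borel_measurable_continuous_onI)
qed

lemma CHAIN: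
  fixes f :: "real^2 \<Rightarrow> real"
  assumes d: "det2 (X - V) (Y - X) \<noteq> 0" and cv: "convex_on (convex hull {V, X, Y}) f"
  shows "f absolutely_integrable_on convex hull {V, X, Y}"
    "integral (convex hull {V, X, Y}) f
       = \<bar>det2 (X - V) (Y - X)\<bar> * (\<integral>s. indicator {0<..<1} s * (s * Gf V X Y f s) \<partial>lborel)"
    "integrable lborel (\<lambda>s. indicator {0<..<1::real} s * (s * Gf V X Y f s))"
proof -
  define F0 where "F0 = (\<lambda>z. f (Phi V X Y z))"
  have cont: "continuous_on Ro F0" using F0_props(1)[OF cv] by (simp add: F0_def)
  obtain K where K: "\<And>z. z \<in> Rc \<Longrightarrow> \<bar>F0 z\<bar> \<le> K" using F0_props(2)[OF cv] by (auto simp: F0_def)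
  define F where "F = (\<lambda>z. indicator Ro z * F0 z)"
  have siF: "set_integrable lborel Ro F0"
    by (rule H1[OF borel_open[OF open_Ro] bounded_Ro cont]) (use K Ro_sub in blast)
  then have intF: "integrable lborel F" by (simp add: set_integrable_def F_def)
  have Fm: "F \<in> borel_measurable borel"
    unfolding F_def using borel_measurable_continuous_on_indicator[OF borel_open[OF open_Ro] cont] by simp
  define h where "h = (\<lambda>p. F (unv2 p))"
  have hm: "h \<in> borel_measurable borel" unfolding h_def using Fm by measurable
  have hv2: "h (v2 z) = F z" for z by (simp add: h_def)
  have inth: "integrable lborel h" using integral_v2(2)[OF hm] intF by (simp add: hv2)
  have heq: "h p = indicator (unv2 -` Ro) p * f (V + Psi0 V X Y p)" for p
    by (simp add: h_def F_def F0_def Phi_unv2 indicator_def)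
  have heq': "h = (\<lambda>p. indicator (unv2 -` Ro) p * f (V + Psi0 V X Y p))"
    using heq by (rule ext)
  have si: "set_integrable lborel (unv2 -` Ro) (\<lambda>p. f (V + Psi0 V X Y p))"
    using inth unfolding set_integrable_def heq' by simp
  show "f absolutely_integrable_on convex hull {V, X, Y}" by (rule CV(1)[OF d si])
  have inner: "(\<integral>v. F (s, v) \<partial>lborel) = indicator {0<..<1} s * (s * Gf V X Y f s)" for s :: real
  proof -
    show "(\<integral>v. F (s, v) \<partial>lborel) = indicator {0<..<1} s * (s * Gf V X Y f s)"
    proof (cases "0 < s \<and> s < 1")
      case True
      have "(\<integral>v. F (s, v) \<partial>lborel) = (\<integral>v. indicator {0<..<s} v * F0 (s, v) \<partial>lborel)"
        using True by (intro Bochner_Integration.integral_cong) (auto simp: F_def Ro_def indicator_def)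
      also have "\<dots> = \<bar>s\<bar> *\<^sub>R (\<integral>t. indicator {0<..<s} (0 + s * t) * F0 (s, 0 + s * t) \<partial>lborel)"
        using True by (intro lborel_integral_real_affine) auto
      also have "\<dots> = s * (\<integral>t. indicator {0<..<1::real} t * F0 (s, s * t) \<partial>lborel)"
        using True by (auto intro!: Bochner_Integration.integral_cong arg_cong2[where f="(*)"] simp: indicator_def zero_less_mult_iff mult_less_cancel_left1)
      finally show ?thesis using True by (simp add: Gf_def F0_def)
    next
      case False
      then have "F (s, v) = 0" for v by (auto simp: F_def Ro_def)
      then show ?thesis using False by simp
    qed
  qed
  have "(LINT p:(unv2 -` Ro)|lborel. f (V + Psi0 V X Y p)) = integral\<^sup>L lborel h"
    by (simp add: set_lebesgue_integral_def heq')
  also have "\<dots> = integral\<^sup>L lborel F" using integral_v2(1)[OF hm] by (simp add: hv2)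
  also have "\<dots> = (\<integral>s. (\<integral>v. F (s, v) \<partial>lborel) \<partial>lborel)"
    using lborel_pair.integral_fst'[of F] intF by (simp add: lborel_prod)
  also have "\<dots> = (\<integral>s. indicator {0<..<1} s * (s * Gf V X Y f s) \<partial>lborel)"
    using inner by simp
  finally have eqL: "(LINT p:(unv2 -` Ro)|lborel. f (V + Psi0 V X Y p))
      = (\<integral>s. indicator {0<..<1} s * (s * Gf V X Y f s) \<partial>lborel)" .
  show "integral (convex hull {V, X, Y}) f
       = \<bar>det2 (X - V) (Y - X)\<bar> * (\<integral>s. indicator {0<..<1} s * (s * Gf V X Y f s) \<partial>lborel)"
    using CV(2)[OF d si] eqL by simp
  show "integrable lborel (\<lambda>s. indicator {0<..<1::real} s * (s * Gf V X Y f s))"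
    using lborel_pair.integrable_fst'[of F] intF by (simp add: lborel_prod inner)
qed



lemma poly_si: "set_integrable lborel {0<..<1::real} (\<lambda>s. s * a + c * (s * (s - 2/3)))"
proof (rule H1[where K="\<bar>a\<bar> + \<bar>c\<bar>"])
  show "continuous_on {0<..<1} (\<lambda>s::real. s * a + c * (s * (s - 2 / 3)))"
    by (intro continuous_intros)
  fix s :: real assume s: "s \<in> {0<..<1}"
  have "\<bar>s * a\<bar> \<le> \<bar>a\<bar>" using s by (simp add: abs_mult mult_left_le_one_le)
  moreover have "\<bar>s * (s - 2/3)\<bar> \<le> 1" using s by (auto simp: abs_mult abs_le_iff intro: mult_le_one)
  then have "\<bar>c * (s * (s - 2/3))\<bar> \<le> \<bar>c\<bar>" by (simp add: abs_mult mult_left_le)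
  ultimately show "\<bar>s * a + c * (s * (s - 2 / 3))\<bar> \<le> \<bar>a\<bar> + \<bar>c\<bar>" by linarith
qed auto

lemma slice_si:
  assumes cv: "convex_on (convex hull {V, X, Y}) f" and s: "0 < s" "s < 1"
  shows "set_integrable lborel {0<..<1::real} (\<lambda>t. f (Phi V X Y (s, s * t)))"
proof -
  obtain K where K: "\<forall>z\<in>Rc. \<bar>f (Phi V X Y z)\<bar> \<le> K" using F0_props(2)[OF cv] by blast
  have c1: "continuous_on {0<..<1::real} (\<lambda>t. (s, s * t))" by (intro continuous_intros)
  have img: "(\<lambda>t. (s, s * t)) ` {0<..<1} \<subseteq> Ro" using s by (auto simp: Ro_def)
  have c: "continuous_on {0<..<1::real} (\<lambda>t. f (Phi V X Y (s, s * t)))"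
    using continuous_on_compose2[OF F0_props(1)[OF cv] c1 img] .
  show ?thesis
    by (rule H1[OF _ _ c, where K=K]) (use K s in \<open>auto simp: Rc_def intro!: mult_le_one\<close>)
qed

lemma Gf_convex:
  assumes cv: "convex_on (convex hull {V, X, Y}) f"
  shows "convex_on {0<..<1} (Gf V X Y f)"
  unfolding convex_on_def
proof (intro conjI convex_real_interval ballI allI impI)
  fix s1 s2 u v :: real
  assume h: "s1 \<in> {0<..<1}" "s2 \<in> {0<..<1}" "0 \<le> u" "0 \<le> v" "u + v = 1"
  define m where "m = u *\<^sub>R s1 + v *\<^sub>R s2"
  have i1: "integrable lborel (\<lambda>t. indicator {0<..<1::real} t * f (Phi V X Y (s1, s1 * t)))"
    using slice_si[OF cv, of s1] h by (simp add: set_integrable_def)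
  have i2: "integrable lborel (\<lambda>t. indicator {0<..<1::real} t * f (Phi V X Y (s2, s2 * t)))"
    using slice_si[OF cv, of s2] h by (simp add: set_integrable_def)
  have m01: "0 < m" "m < 1"
    using convex_Ro_aux[of "s1 / 2" s1 "s2 / 2" s2 u v] h by (auto simp: m_def)
  have im: "integrable lborel (\<lambda>t. indicator {0<..<1::real} t * f (Phi V X Y (m, m * t)))"
    using slice_si[OF cv, of m] m01 by (simp add: set_integrable_def)
  have pw: "indicator {0<..<1::real} t * f (Phi V X Y (m, m * t))
      \<le> u * (indicator {0<..<1::real} t * f (Phi V X Y (s1, s1 * t))) + v * (indicator {0<..<1::real} t * f (Phi V X Y (s2, s2 * t)))" for t
  proof (cases "t \<in> {0<..<1}")
    case True
    have z1: "(s1, s1 * t) \<in> Rc" and z2: "(s2, s2 * t) \<in> Rc"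
      using h True by (auto simp: Rc_def intro!: mult_le_one)
    have eq: "(m, m * t) = u *\<^sub>R (s1, s1 * t) + v *\<^sub>R (s2, s2 * t)"
      by (simp add: m_def algebra_simps)
    have "f (Phi V X Y (u *\<^sub>R (s1, s1 * t) + v *\<^sub>R (s2, s2 * t))) \<le> u * f (Phi V X Y (s1, s1 * t)) + v * f (Phi V X Y (s2, s2 * t))"
      using convex_F0[OF cv] z1 z2 h unfolding convex_on_def by blast
    then have "f (Phi V X Y (m, m * t)) \<le> u * f (Phi V X Y (s1, s1 * t)) + v * f (Phi V X Y (s2, s2 * t))"
      by (simp only: eq)
    then show ?thesis using True by simp
  qed simp
  have "Gf V X Y f m \<le> (\<integral>t. u * (indicator {0<..<1::real} t * f (Phi V X Y (s1, s1 * t))) + v * (indicator {0<..<1::real} t * f (Phi V X Y (s2, s2 * t))) \<partial>lborel)"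
    unfolding Gf_def by (rule integral_mono[OF im _ pw]) (use i1 i2 in simp)
  also have "\<dots> = u * Gf V X Y f s1 + v * Gf V X Y f s2"
    using i1 i2 by (simp add: Gf_def)
  finally show "Gf V X Y f (u *\<^sub>R s1 + v *\<^sub>R s2) \<le> u * Gf V X Y f s1 + v * Gf V X Y f s2"
    by (simp add: m_def)
qed



lemma Gf_23:
  assumes cv: "convex_on (convex hull {V, X, Y}) f"
  shows "Gf V X Y f (2/3) = avg_seg f (homothety V (2/3) X) (homothety V (2/3) Y)"
proof -
  have si: "set_integrable lborel {0<..<1::real} (\<lambda>t. f (Phi V X Y (2/3, 2/3 * t)))"
    using slice_si[OF cv, of "2/3"] by simp
  have "Gf V X Y f (2/3) = (LINT t:{0<..<1}|lborel. f (Phi V X Y (2/3, 2/3 * t)))"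
    by (simp add: Gf_def set_lebesgue_integral_def)
  also have "\<dots> = integral {0<..<1} (\<lambda>t. f (Phi V X Y (2/3, 2/3 * t)))"
    by (rule set_borel_integral_eq_integral(2)[OF si])
  also have "\<dots> = integral {0..1} (\<lambda>t. f (Phi V X Y (2/3, 2/3 * t)))"
    by (simp add: integral_open_interval_real)
  also have "\<dots> = avg_seg f (homothety V (2/3) X) (homothety V (2/3) Y)"
    unfolding avg_seg_def
    by (rule integral_cong) (simp add: Phi_def homothety_def algebra_simps)
  finally show ?thesis .
qed

lemma J_ge:
  assumes cv: "convex_on (convex hull {V, X, Y}) f"
    and int: "integrable lborel (\<lambda>s. indicator {0<..<1::real} s * (s * Gf V X Y f s))"
  shows "Gf V X Y f (2/3) / 2 \<le> (\<integral>s. indicator {0<..<1} s * (s * Gf V X Y f s) \<partial>lborel)"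
proof -
  obtain c where c: "\<forall>s\<in>{0<..<1}. Gf V X Y f (2/3) + c * (s - 2/3) \<le> Gf V X Y f s"
    using subgrad[OF Gf_convex[OF cv], of "2/3"] by auto
  let ?a = "Gf V X Y f (2/3)"
  have "?a / 2 = (\<integral>s. indicator {0<..<1::real} s * (s * ?a + c * (s * (s - 2/3))) \<partial>lborel)"
    using poly_lint[of ?a c] by (simp add: set_lebesgue_integral_def)
  also have "\<dots> \<le> (\<integral>s. indicator {0<..<1} s * (s * Gf V X Y f s) \<partial>lborel)"
  proof (rule integral_mono)
    show "integrable lborel (\<lambda>s. indicator {0<..<1::real} s * (s * ?a + c * (s * (s - 2/3))))"
      using poly_si[of ?a c] by (simp add: set_integrable_def)
    show "integrable lborel (\<lambda>s. indicator {0<..<1::real} s * (s * Gf V X Y f s))" by (rule int)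
    fix s :: real
    show "indicator {0<..<1} s * (s * ?a + c * (s * (s - 2/3))) \<le> indicator {0<..<1} s * (s * Gf V X Y f s)"
    proof (cases "s \<in> {0<..<1}")
      case True
      then have "s * (?a + c * (s - 2/3)) \<le> s * Gf V X Y f s"
        using c by (intro mult_left_mono) auto
      then show ?thesis using True by (simp add: algebra_simps)
    qed simp
  qed
  finally show ?thesis .
qed

lemma TRI:
  fixes f :: "real^2 \<Rightarrow> real"
  assumes d: "det2 (X - V) (Y - X) \<noteq> 0" and cv: "convex_on (convex hull {V, X, Y}) f"
  shows "f absolutely_integrable_on convex hull {V, X, Y}"
    "measure lebesgue (convex hull {V, X, Y}) = \<bar>det2 (X - V) (Y - X)\<bar> / 2"
    "avg_seg f (homothety V (2/3) X) (homothety V (2/3) Y) * measure lebesgue (convex hull {V, X, Y})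
       \<le> integral (convex hull {V, X, Y}) f"
proof -
  show "f absolutely_integrable_on convex hull {V, X, Y}" by (rule CHAIN(1)[OF d cv])
  have cv1: "convex_on (convex hull {V, X, Y}) (\<lambda>_. 1::real)"
    by (simp add: convex_on_const)
  have G1: "Gf V X Y (\<lambda>_. 1) s = 1" for s
    by (simp add: Gf_def)
  have "measure lebesgue (convex hull {V, X, Y}) = integral (convex hull {V, X, Y}) (\<lambda>_. 1::real)"
    by (rule lmeasure_integral) (simp add: lmeasurable_compact compact_convex_hull)
  also have "\<dots> = \<bar>det2 (X - V) (Y - X)\<bar> * (\<integral>s. indicator {0<..<1::real} s * (s * 1) \<partial>lborel)"
    using CHAIN(2)[OF d cv1] by (simp add: G1)
  also have "(\<integral>s. indicator {0<..<1::real} s * (s * 1) \<partial>lborel) = 1/2"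
    using poly_lint[of 1 0] by (simp add: set_lebesgue_integral_def)
  finally show m: "measure lebesgue (convex hull {V, X, Y}) = \<bar>det2 (X - V) (Y - X)\<bar> / 2" by simp
  have "avg_seg f (homothety V (2/3) X) (homothety V (2/3) Y) * measure lebesgue (convex hull {V, X, Y})
      = \<bar>det2 (X - V) (Y - X)\<bar> * (Gf V X Y f (2/3) / 2)"
    using Gf_23[OF cv] m by simp
  also have "\<dots> \<le> \<bar>det2 (X - V) (Y - X)\<bar> * (\<integral>s. indicator {0<..<1} s * (s * Gf V X Y f s) \<partial>lborel)"
    by (rule mult_left_mono[OF J_ge[OF cv CHAIN(3)[OF d cv]]]) simp
  also have "\<dots> = integral (convex hull {V, X, Y}) f"
    using CHAIN(2)[OF d cv] by simp
  finally show "avg_seg f (homothety V (2/3) X) (homothety V (2/3) Y) * measure lebesgue (convex hull {V, X, Y})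
       \<le> integral (convex hull {V, X, Y}) f" .
qed



definition E :: "real^2 \<Rightarrow> real^2 \<Rightarrow> real^2 \<Rightarrow> real \<Rightarrow> real \<Rightarrow> real^2" where
  "E A u w a b = A + a *\<^sub>R u + b *\<^sub>R w"

lemma E_comb:
  "p + q + r = 1 \<Longrightarrow> p *\<^sub>R E A u w a1 b1 + q *\<^sub>R E A u w a2 b2 + r *\<^sub>R E A u w a3 b3
     = E A u w (p*a1+q*a2+r*a3) (p*b1+q*b2+r*b3)"
proof -
  assume h: "p + q + r = 1"
  have "p *\<^sub>R A + q *\<^sub>R A + r *\<^sub>R A = A" by (metis h scaleR_add_left scaleR_one)
  then show ?thesis unfolding E_def by (simp add: algebra_simps)
qed

lemma hull3_E:
  "convex hull {E A u w a1 b1, E A u w a2 b2, E A u w a3 b3} =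
   {E A u w (p*a1+q*a2+r*a3) (p*b1+q*b2+r*b3) | p q r. 0 \<le> p \<and> 0 \<le> q \<and> 0 \<le> r \<and> p + q + r = 1}"
  unfolding convex_hull_3 by (auto simp: E_comb) (metis E_comb)+

lemma E_inj:
  assumes d: "det2 u w \<noteq> 0" and eq: "E A u w a b = E A u w a' b'"
  shows "a = a' \<and> b = b'"
proof -
  have "(a - a') *\<^sub>R u + (b - b') *\<^sub>R w = 0"
    using eq unfolding E_def by (simp add: algebra_simps)
  then have e1: "(a - a') * u$1 + (b - b') * w$1 = 0" and e2: "(a - a') * u$2 + (b - b') * w$2 = 0"
    by (simp_all add: vec_eq_iff forall_2)
  have "(a - a') * det2 u w = w$2 * ((a - a') * u$1 + (b - b') * w$1) - w$1 * ((a - a') * u$2 + (b - b') * w$2)"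
    by (simp add: det2_def algebra_simps)
  then have "(a - a') * det2 u w = 0" using e1 e2 by simp
  moreover have "(b - b') * det2 u w = u$1 * ((a - a') * u$2 + (b - b') * w$2) - u$2 * ((a - a') * u$1 + (b - b') * w$1)"
    by (simp add: det2_def algebra_simps)
  then have "(b - b') * det2 u w = 0" using e1 e2 by simp
  ultimately show ?thesis using d by simp
qed

lemma E_surj:
  assumes d: "det2 u w \<noteq> 0"
  shows "\<exists>a b. x = E A u w a b"
proof -
  define y where "y = x - A"
  define a where "a = det2 y w / det2 u w"
  define b where "b = det2 u y / det2 u w"
  have "x = E A u w a b"
  proof -
    have k1: "det2 y w * u$1 + det2 u y * w$1 = y$1 * det2 u w"
      and k2: "det2 y w * u$2 + det2 u y * w$2 = y$2 * det2 u w"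
      by (simp_all add: det2_def algebra_simps)
    have "y$1 = a * u$1 + b * w$1" "y$2 = a * u$2 + b * w$2"
      using d k1 k2 by (simp_all add: a_def b_def field_simps)
    then have "y = a *\<^sub>R u + b *\<^sub>R w" by (simp add: vec_eq_iff forall_2)
    then show ?thesis by (simp add: E_def y_def algebra_simps)
  qed
  then show ?thesis by blast
qed

lemma memT_gen:
  assumes d: "det2 u w \<noteq> 0"
  shows "E A u w a b \<in> convex hull {E A u w a1 b1, E A u w a2 b2, E A u w a3 b3} \<longleftrightarrow>
   (\<exists>p q r. 0 \<le> p \<and> 0 \<le> q \<and> 0 \<le> r \<and> p + q + r = 1 \<and> a = p*a1+q*a2+r*a3 \<and> b = p*b1+q*b2+r*b3)"
  unfolding hull3_E using E_inj[OF d] by blast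

lemma mem1:
  assumes d: "det2 u w \<noteq> 0"
  shows "E A u w a b \<in> convex hull {E A u w 0 0, E A u w (1/2) (1/2), E A u w 1 0} \<longleftrightarrow> (0 \<le> b \<and> b \<le> a \<and> a + b \<le> 1)"
  unfolding memT_gen[OF d]
  apply (rule iffI)
   apply (elim exE conjE) apply simp
  apply (rule exI[of _ "1-a-b"], rule exI[of _ "2*b"], rule exI[of _ "a-b"]) by simp

lemma mem2:
  assumes d: "det2 u w \<noteq> 0"
  shows "E A u w a b \<in> convex hull {E A u w 1 0, E A u w (1/2) (1/2), E A u w 1 1} \<longleftrightarrow> (b \<le> a \<and> a \<le> 1 \<and> 1 \<le> a + b)"
  unfolding memT_gen[OF d]
  apply (rule iffI)
   apply (elim exE conjE) apply simp
  apply (rule exI[of _ "a-b"], rule exI[of _ "2*(1-a)"], rule exI[of _ "a+b-1"]) by (simp add: field_simps)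

lemma mem3:
  assumes d: "det2 u w \<noteq> 0"
  shows "E A u w a b \<in> convex hull {E A u w 1 1, E A u w (1/2) (1/2), E A u w 0 1} \<longleftrightarrow> (a \<le> b \<and> b \<le> 1 \<and> 1 \<le> a + b)"
  unfolding memT_gen[OF d]
  apply (rule iffI)
   apply (elim exE conjE) apply simp
  apply (rule exI[of _ "a+b-1"], rule exI[of _ "2*(1-b)"], rule exI[of _ "b-a"]) by (simp add: field_simps)

lemma mem4:
  assumes d: "det2 u w \<noteq> 0"
  shows "E A u w a b \<in> convex hull {E A u w 0 1, E A u w (1/2) (1/2), E A u w 0 0} \<longleftrightarrow> (0 \<le> a \<and> a \<le> b \<and> a + b \<le> 1)"
  unfolding memT_gen[OF d]
  apply (rule iffI)
   apply (elim exE conjE) apply simp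
  apply (rule exI[of _ "b-a"], rule exI[of _ "2*a"], rule exI[of _ "1-a-b"]) by simp

lemma sq_sub:
  "convex hull {E A u w 0 0, E A u w 1 0, E A u w 1 1, E A u w 0 1}
    \<subseteq> {E A u w a b | a b. 0 \<le> a \<and> a \<le> 1 \<and> 0 \<le> b \<and> b \<le> 1}"
proof (rule hull_minimal)
  show "{E A u w 0 0, E A u w 1 0, E A u w 1 1, E A u w 0 1}
    \<subseteq> {E A u w a b | a b. 0 \<le> a \<and> a \<le> 1 \<and> 0 \<le> b \<and> b \<le> 1}" by force
  show "convex {E A u w a b | a b. 0 \<le> a \<and> a \<le> 1 \<and> 0 \<le> b \<and> b \<le> 1}"
    unfolding convex_def
  proof (intro ballI allI impI)
    fix x y and p q :: real
    assume x: "x \<in> {E A u w a b | a b. 0 \<le> a \<and> a \<le> 1 \<and> 0 \<le> b \<and> b \<le> 1}"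
      and y: "y \<in> {E A u w a b | a b. 0 \<le> a \<and> a \<le> 1 \<and> 0 \<le> b \<and> b \<le> 1}"
      and pq: "0 \<le> p" "0 \<le> q" "p + q = 1"
    obtain a1 b1 where 1: "x = E A u w a1 b1" "0 \<le> a1" "a1 \<le> 1" "0 \<le> b1" "b1 \<le> 1" using x by blast
    obtain a2 b2 where 2: "y = E A u w a2 b2" "0 \<le> a2" "a2 \<le> 1" "0 \<le> b2" "b2 \<le> 1" using y by blast
    have eq: "p *\<^sub>R x + q *\<^sub>R y = E A u w (p*a1 + q*a2) (p*b1 + q*b2)"
      using E_comb[of p q 0 A u w a1 b1 a2 b2 0 0] pq 1 2 by simp
    have le: "p*a1 + q*a2 \<le> p*1 + q*1" "p*b1 + q*b2 \<le> p*1 + q*1"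
      using pq 1 2 by (intro add_mono mult_left_mono; simp)+
    show "p *\<^sub>R x + q *\<^sub>R y \<in> {E A u w a b | a b. 0 \<le> a \<and> a \<le> 1 \<and> 0 \<le> b \<and> b \<le> 1}"
      unfolding eq
      apply (rule CollectI, rule exI[of _ "p*a1 + q*a2"], rule exI[of _ "p*b1 + q*b2"])
      using pq 1 2 le by simp
  qed
qed

lemma line_negl:
  fixes d P :: "real^2"
  assumes "d \<noteq> 0"
  shows "negligible {P + t *\<^sub>R d | t. True}"
proof -
  define n :: "real^2" where "n = (\<chi> i. if i = 1 then d$2 else - d$1)"
  have n1: "n$1 = d$2" and n2: "n$2 = - d$1" by (simp_all add: n_def)
  have "n \<noteq> 0" using assms n1 n2 by (auto simp: vec_eq_iff forall_2)
  then have "negligible {x. n \<bullet> x = n \<bullet> P}" by (intro negligible_hyperplane) simp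
  moreover have "{P + t *\<^sub>R d | t. True} \<subseteq> {x. n \<bullet> x = n \<bullet> P}"
    by (auto simp: inner_vec_def sum_2 n1 n2 algebra_simps)
  ultimately show ?thesis by (rule negligible_subset)
qed

lemma DEC:
  fixes A u w :: "real^2" and g :: "real^2 \<Rightarrow> real"
  assumes d: "det2 u w \<noteq> 0"
  defines "T1 \<equiv> convex hull {E A u w 0 0, E A u w (1/2) (1/2), E A u w 1 0}"
    and "T2 \<equiv> convex hull {E A u w 1 0, E A u w (1/2) (1/2), E A u w 1 1}"
    and "T3 \<equiv> convex hull {E A u w 1 1, E A u w (1/2) (1/2), E A u w 0 1}"
    and "T4 \<equiv> convex hull {E A u w 0 1, E A u w (1/2) (1/2), E A u w 0 0}"
    and "Q \<equiv> convex hull {E A u w 0 0, E A u w 1 0, E A u w 1 1, E A u w 0 1}"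
  assumes g: "g integrable_on T1" "g integrable_on T2" "g integrable_on T3" "g integrable_on T4"
  shows "integral Q g = integral T1 g + integral T2 g + integral T3 g + integral (T4::(real^2) set) (g :: real^2 \<Rightarrow> real)"
proof -
  define N where "N = {E A u w a b | a b. a = b} \<union> {E A u w a b | a b. a + b = 1}"
  have uw1: "u + w \<noteq> 0"
  proof
    assume "u + w = 0" then have "w = - u" by (simp add: add_eq_0_iff)
    then show False using d by (simp add: det2_def mult.commute)
  qed
  have uw2: "u - w \<noteq> 0"
  proof
    assume "u - w = 0" then have "w = u" by simp
    then show False using d by (simp add: det2_def mult.commute)
  qed
  have "{E A u w a b | a b. a = b} \<subseteq> {A + t *\<^sub>R (u + w) | t. True}"
    by (auto simp: E_def algebra_simps)
  moreover have "{E A u w a b | a b. a + b = 1} \<subseteq> {(A + w) + t *\<^sub>R (u - w) | t. True}"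
  proof
    fix x assume "x \<in> {E A u w a b | a b. a + b = 1}"
    then obtain a b where x: "x = E A u w a b" "a + b = 1" by blast
    have hw: "a *\<^sub>R w + b *\<^sub>R w = w" using x(2) by (metis scaleR_add_left scaleR_one)
    have "x = (A + w) + a *\<^sub>R (u - w)"
      using x(1) hw by (simp add: E_def algebra_simps)
    then show "x \<in> {(A + w) + t *\<^sub>R (u - w) | t. True}" by blast
  qed
  ultimately have negN: "negligible N"
    unfolding N_def
    by (intro negligible_Un negligible_subset[OF line_negl[OF uw1, of A]] negligible_subset[OF line_negl[OF uw2, of "A + w"]])
  have coords: "\<exists>a b. x = E A u w a b" for x using E_surj[OF d] by blast
  have s12: "T1 \<inter> T2 \<subseteq> N"
  proof
    fix x assume xx: "x \<in> T1 \<inter> T2"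
    obtain a b where x: "x = E A u w a b" using coords by blast
    have "a + b = 1" using xx unfolding x T1_def T2_def by (auto simp: mem1[OF d] mem2[OF d])
    then show "x \<in> N" unfolding N_def x by blast
  qed
  have s13: "T1 \<inter> T3 \<subseteq> N"
  proof
    fix x assume xx: "x \<in> T1 \<inter> T3"
    obtain a b where x: "x = E A u w a b" using coords by blast
    have "a = b" using xx unfolding x T1_def T3_def by (auto simp: mem1[OF d] mem3[OF d])
    then show "x \<in> N" unfolding N_def x by blast
  qed
  have s14: "T1 \<inter> T4 \<subseteq> N"
  proof
    fix x assume xx: "x \<in> T1 \<inter> T4"
    obtain a b where x: "x = E A u w a b" using coords by blast
    have "a = b" using xx unfolding x T1_def T4_def by (auto simp: mem1[OF d] mem4[OF d])
    then show "x \<in> N" unfolding N_def x by blast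
  qed
  have s23: "T2 \<inter> T3 \<subseteq> N"
  proof
    fix x assume xx: "x \<in> T2 \<inter> T3"
    obtain a b where x: "x = E A u w a b" using coords by blast
    have "a = b" using xx unfolding x T2_def T3_def by (auto simp: mem2[OF d] mem3[OF d])
    then show "x \<in> N" unfolding N_def x by blast
  qed
  have s24: "T2 \<inter> T4 \<subseteq> N"
  proof
    fix x assume xx: "x \<in> T2 \<inter> T4"
    obtain a b where x: "x = E A u w a b" using coords by blast
    have "a + b = 1" using xx unfolding x T2_def T4_def by (auto simp: mem2[OF d] mem4[OF d])
    then show "x \<in> N" unfolding N_def x by blast
  qed
  have s34: "T3 \<inter> T4 \<subseteq> N"
  proof
    fix x assume xx: "x \<in> T3 \<inter> T4"
    obtain a b where x: "x = E A u w a b" using coords by blast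
    have "a + b = 1" using xx unfolding x T3_def T4_def by (auto simp: mem3[OF d] mem4[OF d])
    then show "x \<in> N" unfolding N_def x by blast
  qed
  have convQ: "convex Q" unfolding Q_def by (rule convex_convex_hull)
  have P00: "E A u w 0 0 \<in> Q" and P10: "E A u w 1 0 \<in> Q" and P11: "E A u w 1 1 \<in> Q" and P01: "E A u w 0 1 \<in> Q"
    unfolding Q_def by (simp_all add: hull_inc)
  have "(1/2) *\<^sub>R E A u w 0 0 + (1/2) *\<^sub>R E A u w 1 1 \<in> Q"
    by (rule convexD[OF convQ P00 P11]) auto
  moreover have "(1/2) *\<^sub>R E A u w 0 0 + (1/2) *\<^sub>R E A u w 1 1 = E A u w (1/2) (1/2)"
    using E_comb[of "1/2" "1/2" 0 A u w 0 0 1 1 0 0] by simp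
  ultimately have Pm: "E A u w (1/2) (1/2) \<in> Q" by simp
  have Qeq: "Q = ((T1 \<union> T2) \<union> T3) \<union> T4"
  proof
    show "T1 \<union> T2 \<union> T3 \<union> T4 \<subseteq> Q"
      unfolding T1_def T2_def T3_def T4_def
      by (intro Un_least hull_minimal convQ) (use P00 P10 P11 P01 Pm in auto)
    show "Q \<subseteq> T1 \<union> T2 \<union> T3 \<union> T4"
    proof
      fix x assume "x \<in> Q"
      then obtain a b where x: "x = E A u w a b" "0 \<le> a" "a \<le> 1" "0 \<le> b" "b \<le> 1"
        using sq_sub unfolding Q_def by blast
      consider "b \<le> a" "a + b \<le> 1" | "b \<le> a" "1 \<le> a + b" | "a \<le> b" "1 \<le> a + b" | "a \<le> b" "a + b \<le> 1"
        by linarith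
      then show "x \<in> T1 \<union> T2 \<union> T3 \<union> T4"
      proof cases
        case 1 then have "x \<in> T1" using x unfolding T1_def by (simp add: mem1[OF d])
        then show ?thesis by blast
      next
        case 2 then have "x \<in> T2" using x unfolding T2_def by (simp add: mem2[OF d])
        then show ?thesis by blast
      next
        case 3 then have "x \<in> T3" using x unfolding T3_def by (simp add: mem3[OF d])
        then show ?thesis by blast
      next
        case 4 then have "x \<in> T4" using x unfolding T4_def by (simp add: mem4[OF d])
        then show ?thesis by blast
      qed
    qed
  qed
  have n1: "negligible (T1 \<inter> T2)" by (rule negligible_subset[OF negN s12])
  have n2: "negligible ((T1 \<union> T2) \<inter> T3)" by (rule negligible_subset[OF negN]) (use s13 s23 in blast)
  have n3: "negligible ((T1 \<union> T2 \<union> T3) \<inter> T4)" by (rule negligible_subset[OF negN]) (use s14 s24 s34 in blast)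
  have i12: "g integrable_on (T1 \<union> T2)" by (rule integrable_Un[OF n1 g(1) g(2)])
  have i123: "g integrable_on (T1 \<union> T2 \<union> T3)" by (rule integrable_Un[OF n2 i12 g(3)])
  have "integral Q g = integral (T1 \<union> T2 \<union> T3) g + integral T4 g"
    unfolding Qeq by (rule integral_Un[OF i123 g(4) n3])
  also have "integral (T1 \<union> T2 \<union> T3) g = integral (T1 \<union> T2) g + integral T3 g"
    by (rule integral_Un[OF i12 g(3) n2])
  also have "integral (T1 \<union> T2) g = integral T1 g + integral T2 g"
    by (rule integral_Un[OF g(1) g(2) n1])
  finally show ?thesis .
qed



lemma det0_col:
  fixes x y :: "real^2"
  assumes "det2 x y = 0"
  shows "collinear {0, x, y}"
proof (cases "x = 0")
  case True then show ?thesis by (simp add: collinear_lemma)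
next
  case False
  show ?thesis
  proof (cases "x$1 = 0")
    case True
    then have x2: "x$2 \<noteq> 0" using False by (auto simp: vec_eq_iff forall_2)
    have "y$1 = 0" using assms True x2 by (simp add: det2_def)
    then have "y = (y$2 / x$2) *\<^sub>R x" using True x2 by (simp add: vec_eq_iff forall_2)
    then show ?thesis by (auto simp: collinear_lemma)
  next
    case False
    have "y$2 * x$1 = y$1 * x$2" using assms by (simp add: det2_def algebra_simps)
    then have "y$2 = y$1 * x$2 / x$1" using False by (simp add: field_simps)
    then have "y = (y$1 / x$1) *\<^sub>R x" using False by (simp add: vec_eq_iff forall_2)
    then show ?thesis by (auto simp: collinear_lemma)
  qed
qed

lemma TRI':
  fixes f :: "real^2 \<Rightarrow> real"
  assumes dd: "det2 (X - V) (Y - X) = c * \<delta>" and c: "\<bar>c\<bar> = 1/2" and d: "\<delta> \<noteq> 0"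
    and cv: "convex_on T f" and T: "convex hull {V, X, Y} = T"
  shows "f absolutely_integrable_on T" "measure lebesgue T = \<bar>\<delta>\<bar> / 4"
    "avg_seg f (homothety V (2/3) X) (homothety V (2/3) Y) * (\<bar>\<delta>\<bar> / 4) \<le> integral T f"
proof -
  have d0: "det2 (X - V) (Y - X) \<noteq> 0" using dd c d by auto
  have ab: "\<bar>det2 (X - V) (Y - X)\<bar> / 2 = \<bar>\<delta>\<bar> / 4" using dd c by (simp add: abs_mult)
  note R = TRI[OF d0, of f, unfolded T, OF cv]
  show "f absolutely_integrable_on T" by (rule R(1))
  show m: "measure lebesgue T = \<bar>\<delta>\<bar> / 4" using R(2) ab by simp
  show "avg_seg f (homothety V (2/3) X) (homothety V (2/3) Y) * (\<bar>\<delta>\<bar> / 4) \<le> integral T f"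
    using R(3) m by simp
qed

theorem theorem3p4:
  fixes A B C D :: "real^2" and f :: "real^2 \<Rightarrow> real"
  assumes para: "A + C = B + D"
    and nondeg: "\<not> collinear {A, B, C}"
    and convAOB: "convex_on (convex hull {A, midpoint A C, B}) f"
    and convBOC: "convex_on (convex hull {B, midpoint A C, C}) f"
    and convCOD: "convex_on (convex hull {C, midpoint A C, D}) f"
    and convDOA: "convex_on (convex hull {D, midpoint A C, A}) f"
  shows
   "(let Z = midpoint A C;
        K = homothety D (2/3) A; L = homothety D (2/3) Z; M = homothety D (2/3) C;
        P = homothety B (2/3) A; Q = homothety B (2/3) Z; R = homothety B (2/3) C
    in (avg_seg f K L + avg_seg f L M + avg_seg f P Q + avg_seg f Q R) / 4
         \<le> avg_region f (convex hull {A, B, C, D}))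
    \<and> (let Z = midpoint A C;
        A' = homothety Z (2/3) A; B' = homothety Z (2/3) B;
        C' = homothety Z (2/3) C; D' = homothety Z (2/3) D
    in (avg_seg f A' B' + avg_seg f B' C' + avg_seg f C' D' + avg_seg f D' A') / 4
         \<le> avg_region f (convex hull {A, B, C, D}))"
proof -
  define Z where "Z = midpoint A C"
  define u where "u = B - A"
  define w where "w = D - A"
  define \<delta> where "\<delta> = det2 u w"
  have Bq: "B = A + u" by (simp add: u_def)
  have Dq: "D = A + w" by (simp add: w_def)
  have "C = B + D - A" using para by (metis add_diff_cancel_left')
  then have Cq: "C = A + u + w" by (simp add: u_def w_def algebra_simps)
  have Zq: "Z = A + (1/2) *\<^sub>R (u + w)"
    unfolding Z_def Cq by (simp add: midpoint_def vec_eq_iff algebra_simps)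
  have d: "\<delta> \<noteq> 0"
  proof
    assume "\<delta> = 0"
    then have "det2 (A - B) (C - B) = 0" by (simp add: Bq Cq \<delta>_def det2_def algebra_simps)
    then have "collinear {0, A - B, C - B}" by (rule det0_col)
    then have "collinear {A, B, C}" using collinear_3[of A B C] by (simp add: NO_MATCH_def)
    then show False using nondeg by simp
  qed
  have eA: "E A u w 0 0 = A" and eB: "E A u w 1 0 = B" and eC: "E A u w 1 1 = C"
    and eD: "E A u w 0 1 = D" and eZ: "E A u w (1/2) (1/2) = Z"
    by (simp_all add: E_def Bq Cq Dq Zq algebra_simps)
  have cAZB: "convex_on (convex hull {A, Z, B}) f" using convAOB by (simp add: Z_def)
  have cBZC: "convex_on (convex hull {B, Z, C}) f" using convBOC by (simp add: Z_def)
  have cCZD: "convex_on (convex hull {C, Z, D}) f" using convCOD by (simp add: Z_def)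
  have cDZA: "convex_on (convex hull {D, Z, A}) f" using convDOA by (simp add: Z_def)
  let ?m = "\<bar>\<delta>\<bar> / 4"
  have s1: "convex hull {D, A, Z} = convex hull {D, Z, A}" by (simp add: insert_commute)
  have s2: "convex hull {D, Z, C} = convex hull {C, Z, D}" by (simp add: insert_commute)
  have s3: "convex hull {B, A, Z} = convex hull {A, Z, B}" by (simp add: insert_commute)
  have s5: "convex hull {Z, A, B} = convex hull {A, Z, B}" by (simp add: insert_commute)
  have s6: "convex hull {Z, B, C} = convex hull {B, Z, C}" by (simp add: insert_commute)
  have s7: "convex hull {Z, C, D} = convex hull {C, Z, D}" by (simp add: insert_commute)
  have s8: "convex hull {Z, D, A} = convex hull {D, Z, A}" by (simp add: insert_commute)
  have h1: "\<bar>1/2::real\<bar> = 1/2" and h2: "\<bar>-1/2::real\<bar> = 1/2" by simp_all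
  have d1: "det2 (A - D) (Z - A) = 1/2 * \<delta>" by (simp add: Dq Zq \<delta>_def det2_def algebra_simps)
  have d2: "det2 (Z - D) (C - Z) = 1/2 * \<delta>" by (simp add: Dq Zq Cq \<delta>_def det2_def algebra_simps)
  have d3: "det2 (A - B) (Z - A) = -1/2 * \<delta>" by (simp add: Bq Zq \<delta>_def det2_def algebra_simps)
  have d4: "det2 (Z - B) (C - Z) = -1/2 * \<delta>" by (simp add: Bq Zq Cq \<delta>_def det2_def algebra_simps)
  have d5: "det2 (A - Z) (B - A) = 1/2 * \<delta>" by (simp add: Bq Zq \<delta>_def det2_def algebra_simps)
  have d6: "det2 (B - Z) (C - B) = 1/2 * \<delta>" by (simp add: Bq Zq Cq \<delta>_def det2_def algebra_simps)
  have d7: "det2 (C - Z) (D - C) = 1/2 * \<delta>" by (simp add: Dq Zq Cq \<delta>_def det2_def algebra_simps)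
  have d8: "det2 (D - Z) (A - D) = 1/2 * \<delta>" by (simp add: Dq Zq \<delta>_def det2_def algebra_simps)
  note KL = TRI'[OF d1 h1 d cDZA s1]
  note LM = TRI'[OF d2 h1 d cCZD s2]
  note PQ = TRI'[OF d3 h2 d cAZB s3]
  note QR = TRI'[OF d4 h2 d cBZC refl]
  note AB = TRI'[OF d5 h1 d cAZB s5]
  note BC = TRI'[OF d6 h1 d cBZC s6]
  note CD = TRI'[OF d7 h1 d cCZD s7]
  note DA = TRI'[OF d8 h1 d cDZA s8]
  have lm: "convex hull S \<in> lmeasurable" if "finite S" for S :: "(real^2) set"
    using that by (simp add: lmeasurable_compact compact_convex_hull finite_imp_compact)
  have dd: "det2 u w \<noteq> 0" using d by (simp add: \<delta>_def)
  note dec = DEC[where A=A and u=u and w=w, unfolded eA eB eC eD eZ, OF dd]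
  have intf: "integral (convex hull {A, B, C, D}) f = integral (convex hull {A, Z, B}) f
     + integral (convex hull {B, Z, C}) f + integral (convex hull {C, Z, D}) f + integral (convex hull {D, Z, A}) f"
    by (rule dec) (use AB(1) BC(1) CD(1) DA(1) in \<open>auto simp: absolutely_integrable_on_def\<close>)
  have "measure lebesgue (convex hull {A, B, C, D}) = integral (convex hull {A, B, C, D}) (\<lambda>_. 1::real)"
    by (rule lmeasure_integral[OF lm]) simp
  also have "\<dots> = integral (convex hull {A, Z, B}) (\<lambda>_. 1::real)
     + integral (convex hull {B, Z, C}) (\<lambda>_. 1) + integral (convex hull {C, Z, D}) (\<lambda>_. 1) + integral (convex hull {D, Z, A}) (\<lambda>_. 1)"
    by (rule dec) (auto intro!: integrable_on_const lm)
  also have "\<dots> = 4 * ?m"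
    using AB(2) BC(2) CD(2) DA(2) by (simp add: lmeasure_integral[OF lm, symmetric])
  finally have measP: "measure lebesgue (convex hull {A, B, C, D}) = 4 * ?m" .
  have mpos: "0 < ?m" using d by simp
  have avg: "avg_region f (convex hull {A, B, C, D}) = (integral (convex hull {A, Z, B}) f
     + integral (convex hull {B, Z, C}) f + integral (convex hull {C, Z, D}) f + integral (convex hull {D, Z, A}) f) / (4 * ?m)"
    unfolding avg_region_def intf measP ..
  have key: "a1 + a2 + a3 + a4 \<le> t1 + t2 + t3 + t4 \<Longrightarrow> (b1 + b2 + b3 + b4) / 4 \<le> (t1 + t2 + t3 + t4) / (4 * ?m)"
    if "a1 = b1 * ?m" "a2 = b2 * ?m" "a3 = b3 * ?m" "a4 = b4 * ?m" for a1 a2 a3 a4 b1 b2 b3 b4 t1 t2 t3 t4 :: real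
    using mpos that by (simp add: pos_le_divide_eq field_simps)
  show ?thesis
    unfolding Let_def Z_def[symmetric] avg
  proof
    show "(avg_seg f (homothety D (2/3) A) (homothety D (2/3) Z) + avg_seg f (homothety D (2/3) Z) (homothety D (2/3) C)
        + avg_seg f (homothety B (2/3) A) (homothety B (2/3) Z) + avg_seg f (homothety B (2/3) Z) (homothety B (2/3) C)) / 4
      \<le> (integral (convex hull {A, Z, B}) f + integral (convex hull {B, Z, C}) f + integral (convex hull {C, Z, D}) f
        + integral (convex hull {D, Z, A}) f) / (4 * ?m)"
      apply (rule key[OF refl refl refl refl])
      using PQ(3) QR(3) LM(3) KL(3) by linarith
    show "(avg_seg f (homothety Z (2/3) A) (homothety Z (2/3) B) + avg_seg f (homothety Z (2/3) B) (homothety Z (2/3) C)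
        + avg_seg f (homothety Z (2/3) C) (homothety Z (2/3) D) + avg_seg f (homothety Z (2/3) D) (homothety Z (2/3) A)) / 4
      \<le> (integral (convex hull {A, Z, B}) f + integral (convex hull {B, Z, C}) f + integral (convex hull {C, Z, D}) f
        + integral (convex hull {D, Z, A}) f) / (4 * ?m)"
      apply (rule key[OF refl refl refl refl])
      using AB(3) BC(3) CD(3) DA(3) by linarith
  qed
qed


end
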